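(* Let $\mathcal{C}$ be an $\ell$-quasi-cyclic code over $\mathbb{F}_q$ of length $\ell m$ with $\gcd(m,\mathrm{char}(\mathbb{F}_q))=1$. Let $\mathbf{G}(X)\in\mathbb{F}_q[X]^{\ell\times\ell}$ be a generator matrix of $\mathcal{C}$ in RGB/POT form and let $\bar{\mathbf{G}}(X)\in\mathbb{F}_q[X]^{\ell\times\ell}$ be a generator matrix of the same code $\mathcal{C}$ in Pre-RGB/POT form. Let $\lambda$ be an eigenvalue of $\mathbf{G}(X)$. Then the right kernels of $\mathbf{G}(\lambda)$ and $\bar{\mathbf{G}}(\lambda)$ (over an extension field of $\mathbb{F}_q$ containing $\lambda$) are equal; in particular the multiplicities and corresponding eigenvectors coincide.
   Context: An $\ell$-quasi-cyclic code $\mathcal{C}$ of length $\ell m$ over $\mathbb{F}_q$ is a linear code such that if $(c_{0,0},\dots,c_{\ell-1,0},c_{0,1},\dots,c_{\ell-1,1},\dots,c_{0,m-1},\dots,c_{\ell-1,m-1})\in\mathcal{C}$ then the cyclic shift by $\ell$ positions $(c_{0,m-1},\dots,c_{\ell-1,m-1},c_{0,0},\dots,c_{\ell-1,0},\dots,c_{0,m-2},\dots,c_{\ell-1,m-2})\in\mathcal{C}$. A codeword is identified with the vector $(c_0(X),\dots,c_{\ell-1}(X))$, $c_j(X)=\sum_{i=0}^{m-1}c_{j,i}X^i$; then $\mathcal{C}$ is an $R$-submodule of $R^\ell$, $R=\mathbb{F}_q[X]/\langle X^m-1\rangle$, and is the image under componentwise reduction modulo $X^m-1$ of an $\mathbb{F}_q[X]$-submodule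 $\tilde{\mathcal{C}}\subseteq\mathbb{F}_q[X]^\ell$ containing $(X^m-1)\mathbf{e}_j$ for all $j$. A matrix $\mathbf{M}(X)\in\mathbb{F}_q[X]^{\ell\times\ell}$ is a generator matrix of $\mathcal{C}$ if its rows together with $(X^m-1)\mathbf{e}_j$, $j=0,\dots,\ell-1$, generate $\tilde{\mathcal{C}}$. It is in RGB/POT (reduced Gröbner basis, position-over-term) form if, writing $\mathbf{M}=(g_{i,j}(X))$: (C1) $g_{i,j}=0$ for $0\le j<i<\ell$; (C2) $\deg g_{j,i}<\deg g_{i,i}$ for all $j<i$; (C3) $g_{i,i}\mid X^m-1$ for all $i$; (C4) if $g_{i,i}=X^m-1$ then $g_{i,j}=0$ for all $j>i$. It is in Pre-RGB/POT form if it satisfies C1, C3 and C4 (C2 is not required), with the same diagonal entries as the RGB/POT form. An eigenvalue of $\mathbf{G}(X)$ is a root (in an extension field) of $\det\mathbf{G}(X)=\prod_i g_{i,i}(X)$; its algebraic multiplicity is the largest $\mu$ with $(X-\lambda)^\mu\mid\det\mathbf{G}(X)$, and its geometric multiplicity is the dimension of the right kernel of $\mathbf{G}(\lambda)$. *)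

theory Defs
  imports "HOL-Computational_Algebra.Polynomial"
begin

(* Vectors in F[X]^l are functions nat => 'a poly, meaningful on indices < l
   (set to 0 outside). Matrices are functions nat => nat => 'a poly, entry (i,j)
   meaningful for i, j < l. *)

definition xm1 :: "nat \<Rightarrow> 'a::comm_ring_1 poly" where
  "xm1 m = monom 1 m - 1"

definition gen_module :: "nat \<Rightarrow> nat \<Rightarrow> (nat \<Rightarrow> nat \<Rightarrow> 'a::field poly) \<Rightarrow> (nat \<Rightarrow> 'a poly) set" where
  "gen_module l m M = {v. \<exists>a b. v = (\<lambda>k. if k < l then (\<Sum>i<l. a i * M i k) + b k * xm1 m else 0)}"

(* The code (subset of R^l, represented by reduced representatives) generated by M:
   image of the generated module under componentwise reduction mod X^m - 1. *)
definition code_of :: "nat \<Rightarrow> nat \<Rightarrow> (nat \<Rightarrow> nat \<Rightarrow> 'a::field poly) \<Rightarrow> (nat \<Rightarrow> 'a poly) set" where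
  "code_of l m M = (\<lambda>v k. v k mod xm1 m) ` gen_module l m M"

definition is_generator_matrix :: "nat \<Rightarrow> nat \<Rightarrow> (nat \<Rightarrow> 'a::field poly) set \<Rightarrow> (nat \<Rightarrow> nat \<Rightarrow> 'a poly) \<Rightarrow> bool" where
  "is_generator_matrix l m C M \<longleftrightarrow> code_of l m M = C"

definition C1 :: "nat \<Rightarrow> (nat \<Rightarrow> nat \<Rightarrow> 'a::field poly) \<Rightarrow> bool" where
  "C1 l M \<longleftrightarrow> (\<forall>i j. j < i \<and> i < l \<longrightarrow> M i j = 0)"

(* deg 0 = -infinity convention: deg g_{j,i} < deg g_{i,i} *)
definition C2 :: "nat \<Rightarrow> (nat \<Rightarrow> nat \<Rightarrow> 'a::field poly) \<Rightarrow> bool" where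
  "C2 l M \<longleftrightarrow> (\<forall>i j. j < i \<and> i < l \<longrightarrow> M j i = 0 \<or> degree (M j i) < degree (M i i))"

definition C3 :: "nat \<Rightarrow> nat \<Rightarrow> (nat \<Rightarrow> nat \<Rightarrow> 'a::field poly) \<Rightarrow> bool" where
  "C3 l m M \<longleftrightarrow> (\<forall>i < l. M i i dvd xm1 m)"

definition C4 :: "nat \<Rightarrow> nat \<Rightarrow> (nat \<Rightarrow> nat \<Rightarrow> 'a::field poly) \<Rightarrow> bool" where
  "C4 l m M \<longleftrightarrow> (\<forall>i < l. M i i = xm1 m \<longrightarrow> (\<forall>j. i < j \<and> j < l \<longrightarrow> M i j = 0))"

definition RGB_POT :: "nat \<Rightarrow> nat \<Rightarrow> (nat \<Rightarrow> nat \<Rightarrow> 'a::field poly) \<Rightarrow> bool" where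
  "RGB_POT l m M \<longleftrightarrow> C1 l M \<and> C2 l M \<and> C3 l m M \<and> C4 l m M"

definition Pre_RGB_POT :: "nat \<Rightarrow> nat \<Rightarrow> (nat \<Rightarrow> nat \<Rightarrow> 'a::field poly) \<Rightarrow> (nat \<Rightarrow> nat \<Rightarrow> 'a poly) \<Rightarrow> bool" where
  "Pre_RGB_POT l m G M \<longleftrightarrow> C1 l M \<and> C3 l m M \<and> C4 l m M \<and> (\<forall>i < l. M i i = G i i)"

definition field_embedding :: "('a::field \<Rightarrow> 'b::field) \<Rightarrow> bool" where
  "field_embedding \<phi> \<longleftrightarrow> \<phi> 0 = 0 \<and> \<phi> 1 = 1 \<and>
     (\<forall>x y. \<phi> (x + y) = \<phi> x + \<phi> y) \<and> (\<forall>x y. \<phi> (x * y) = \<phi> x * \<phi> y)"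

definition det_upper :: "nat \<Rightarrow> (nat \<Rightarrow> nat \<Rightarrow> 'a::field poly) \<Rightarrow> 'a poly" where
  "det_upper l M = (\<Prod>i<l. M i i)"

definition is_eigenvalue :: "('a::field \<Rightarrow> 'b::field) \<Rightarrow> nat \<Rightarrow> (nat \<Rightarrow> nat \<Rightarrow> 'a poly) \<Rightarrow> 'b \<Rightarrow> bool" where
  "is_eigenvalue \<phi> l M z \<longleftrightarrow> poly (map_poly \<phi> (det_upper l M)) z = 0"

definition right_kernel :: "('a::field \<Rightarrow> 'b::field) \<Rightarrow> nat \<Rightarrow> (nat \<Rightarrow> nat \<Rightarrow> 'a poly) \<Rightarrow> 'b \<Rightarrow> (nat \<Rightarrow> 'b) set" where
  "right_kernel \<phi> l M z = {v. (\<forall>j\<ge>l. v j = 0) \<and>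
      (\<forall>i<l. (\<Sum>j<l. poly (map_poly \<phi> (M i j)) z * v j) = 0)}"

end

theory Submission
  imports Defs
begin

lemma fe_minus:
  assumes "field_embedding \<phi>" shows "\<phi> (- x) = - \<phi> x"
proof -
  have "\<phi> x + \<phi> (- x) = 0" using assms unfolding field_embedding_def
    by (metis add.right_inverse)
  thus ?thesis by (simp add: add_eq_0_iff)
qed

lemma mp_add:
  assumes "field_embedding \<phi>"
  shows "map_poly \<phi> (p + q) = map_poly \<phi> p + map_poly \<phi> q"
  using assms unfolding field_embedding_def
  by (intro poly_eqI) (simp add: coeff_map_poly)

lemma mp_diff:
  assumes "field_embedding \<phi>"
  shows "map_poly \<phi> (p - q) = map_poly \<phi> p - map_poly \<phi> q"
proof -
  have "map_poly \<phi> (- q) = - map_poly \<phi> q"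
    using assms fe_minus[OF assms] unfolding field_embedding_def
    by (intro poly_eqI) (simp add: coeff_map_poly)
  thus ?thesis using mp_add[OF assms, of p "-q"] by simp
qed

lemma mp_mult:
  assumes "field_embedding \<phi>"
  shows "map_poly \<phi> (p * q) = map_poly \<phi> p * map_poly \<phi> q"
proof (induction p)
  case 0
  then show ?case by simp
next
  case (pCons a p)
  have f0: "\<phi> 0 = 0" and fm: "\<And>c x. \<phi> (c * x) = \<phi> c * \<phi> x"
    using assms unfolding field_embedding_def by auto
  have "map_poly \<phi> (pCons a p * q) = map_poly \<phi> (smult a q + pCons 0 (p * q))"
    by simp
  also have "\<dots> = smult (\<phi> a) (map_poly \<phi> q) + pCons 0 (map_poly \<phi> p * map_poly \<phi> q)"
    by (simp add: mp_add[OF assms] map_poly_smult[of \<phi>, OF f0 fm] map_poly_pCons[of \<phi>, OF f0] pCons.IH f0)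
  also have "\<dots> = map_poly \<phi> (pCons a p) * map_poly \<phi> q"
    by (simp add: map_poly_pCons[of \<phi>, OF f0])
  finally show ?case .
qed

lemma mp_sum:
  assumes "field_embedding \<phi>"
  shows "map_poly \<phi> (\<Sum>i\<in>A. f i) = (\<Sum>i\<in>A. map_poly \<phi> (f i))"
  by (induction A rule: infinite_finite_induct) (simp_all add: mp_add[OF assms])

lemma mp_prod:
  assumes "field_embedding \<phi>"
  shows "map_poly \<phi> (\<Prod>i\<in>A. f i) = (\<Prod>i\<in>A. map_poly \<phi> (f i))"
  using assms
  by (induction A rule: infinite_finite_induct) (simp_all add: mp_mult[OF assms] field_embedding_def)

lemma kernel_sub:
  fixes M N :: "nat \<Rightarrow> nat \<Rightarrow> 'a::field poly" and \<phi> :: "'a \<Rightarrow> 'b::field"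
  assumes fe: "field_embedding \<phi>"
    and x0: "poly (map_poly \<phi> (xm1 m)) z = 0"
    and cs: "code_of l m M \<subseteq> code_of l m N"
  shows "right_kernel \<phi> l N z \<subseteq> right_kernel \<phi> l M z"
proof
  define E where "E p = poly (map_poly \<phi> p) z" for p
  have Eadd: "E (p + q) = E p + E q" for p q by (simp add: E_def mp_add[OF fe])
  have Ediff: "E (p - q) = E p - E q" for p q by (simp add: E_def mp_diff[OF fe])
  have Emult: "E (p * q) = E p * E q" for p q by (simp add: E_def mp_mult[OF fe])
  have Esum: "E (\<Sum>i\<in>A. f i) = (\<Sum>i\<in>A. E (f i))" for A and f :: "nat \<Rightarrow> 'a poly"
    by (simp add: E_def mp_sum[OF fe] poly_sum)
  have Ex: "E (xm1 m) = 0" using x0 by (simp add: E_def)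
  have Edvd: "E p = 0" if "xm1 m dvd p" for p
    using that Ex Emult by (auto elim!: dvdE)
  fix v assume v: "v \<in> right_kernel \<phi> l N z"
  have vz: "\<forall>j\<ge>l. v j = 0" and vk: "\<And>i. i < l \<Longrightarrow> (\<Sum>j<l. E (N i j) * v j) = 0"
    using v unfolding right_kernel_def E_def by auto
  have "(\<Sum>k<l. E (M i k) * v k) = 0" if il: "i < l" for i
  proof -
    define r where "r = (\<lambda>k. if k < l then M i k else 0)"
    have "r \<in> gen_module l m M"
      unfolding gen_module_def r_def
      by (rule CollectI, rule exI[of _ "\<lambda>j. if j = i then 1 else 0"], rule exI[of _ "\<lambda>_. 0"])
         (rule ext, simp add: il if_distrib[of "\<lambda>x. x * _"] sum.delta cong: if_cong)
    hence "(\<lambda>k. r k mod xm1 m) \<in> code_of l m N" using cs unfolding code_of_def by auto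
    then obtain u where u: "u \<in> gen_module l m N" and ru: "(\<lambda>k. r k mod xm1 m) = (\<lambda>k. u k mod xm1 m)"
      unfolding code_of_def by auto
    then obtain a b where uab: "u = (\<lambda>k. if k < l then (\<Sum>j<l. a j * N j k) + b k * xm1 m else 0)"
      unfolding gen_module_def by auto
    have Mk: "E (M i k) = (\<Sum>j<l. E (a j) * E (N j k))" if kl: "k < l" for k
    proof -
      have "r k mod xm1 m = u k mod xm1 m" using ru by meson
      hence "xm1 m dvd r k - u k" by (simp add: mod_eq_dvd_iff)
      hence "E (r k - u k) = 0" by (rule Edvd)
      hence "E (M i k) = E (u k)" using kl by (simp add: Ediff r_def)
      also have "\<dots> = (\<Sum>j<l. E (a j) * E (N j k))"
        using kl by (simp add: uab Eadd Esum Emult Ex)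
      finally show ?thesis .
    qed
    have "(\<Sum>k<l. E (M i k) * v k) = (\<Sum>k<l. \<Sum>j<l. E (a j) * (E (N j k) * v k))"
      by (rule sum.cong) (simp_all add: Mk sum_distrib_right mult.assoc)
    also have "\<dots> = (\<Sum>j<l. E (a j) * (\<Sum>k<l. E (N j k) * v k))"
      by (subst sum.swap) (simp add: sum_distrib_left)
    also have "\<dots> = 0" by (simp add: vk)
    finally show ?thesis .
  qed
  thus "v \<in> right_kernel \<phi> l M z" using vz unfolding right_kernel_def E_def by auto
qed

theorem lemma2:
  fixes C :: "(nat \<Rightarrow> 'a::{field,finite} poly) set"
    and l m :: nat
    and G Gbar :: "nat \<Rightarrow> nat \<Rightarrow> 'a poly"
    and \<phi> :: "'a \<Rightarrow> 'b::field"
    and z :: 'b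
  assumes "coprime m CHAR('a)"
    and "is_generator_matrix l m C G" and "RGB_POT l m G"
    and "is_generator_matrix l m C Gbar" and "Pre_RGB_POT l m G Gbar"
    and "field_embedding \<phi>"
    and "is_eigenvalue \<phi> l G z"
  shows "right_kernel \<phi> l G z = right_kernel \<phi> l Gbar z"
proof -
  note fe = assms(6)
  have "(\<Prod>i<l. poly (map_poly \<phi> (G i i)) z) = 0"
    using assms(7) unfolding is_eigenvalue_def det_upper_def
    by (simp add: mp_prod[OF fe] poly_prod)
  then obtain i where il: "i < l" and gi: "poly (map_poly \<phi> (G i i)) z = 0"
    by auto
  have "G i i dvd xm1 m" using assms(3) il unfolding RGB_POT_def C3_def by auto
  then obtain c where "xm1 m = G i i * c" by (elim dvdE)
  hence x0: "poly (map_poly \<phi> (xm1 m)) z = 0" by (simp add: mp_mult[OF fe] gi)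
  have eq: "code_of l m G = code_of l m Gbar"
    using assms(2,4) unfolding is_generator_matrix_def by simp
  show ?thesis
    using kernel_sub[OF fe x0, of l G Gbar] kernel_sub[OF fe x0, of l Gbar G] eq by auto
qed

end
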